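(* Let $\mathfrak{K}=(\{a,b\},R,E)$ be the $\mathsf{MS4}$-frame with $R[a]=\{a,b\}$, $R[b]=\{b\}$, $E[a]=E[b]=\{a,b\}$, and let $\mathfrak{H}=(\{a,b,c\},R,E)$ be the $\mathsf{MS4}$-frame with $R[a]=\{a,b,c\}$, $R[b]=R[c]=\{b,c\}$, $E[a]=E[b]=\{a,b\}$, $E[c]=\{c\}$. Then: (1) $\mathfrak{K}\vDash\mathsf{MGrz}$ but $\mathfrak{K}\nvDash\mathsf{LKur}$; (2) $\mathfrak{H}\vDash\mathsf{LKur}$ but $\mathfrak{H}\nvDash\mathsf{MGrz}$; (3) $\mathsf{MGrz}$ and $\mathsf{LKur}$ are incomparable (neither contains the other).
   Context: $\mathsf{MS4}$ is the smallest set of formulas in the classical bimodal language $\mathcal{L}_{\Box\forall}$ containing all classical tautologies, the $\mathsf{S4}$ axioms for $\Box$, the $\mathsf{S5}$ axioms for $\forall$, and $\Box\forall p\to\forall\Box p$, closed under modus ponens, substitution, $\Box$- and $\forall$-necessitation; $\Diamond=\neg\Box\neg$, $\exists=\neg\forall\neg$. $\mathsf{MGrz}=\mathsf{MS4}+\Box(\Box(p\to\Box p)\to p)\to p$ and $\mathsf{LKur}=\mathsf{MS4}+\Box\forall\Diamond\Box p\to\Diamond\forall p$ (smallest extensions closed under the same rules containing the extra axiom). An $\mathsf{MS4}$-frame is $(Y,R,E)$ with $R$ a quasi-order, $E$ an equivalence relation, such that $xEy$ and $yRz$ imply there is $u$ with $xRu$ and $uEz$. Formulas are evaluated with valuations assigning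 subsets of $Y$ to letters, $\Box$ interpreted via $R$ and $\forall$ via $E$; a frame validates a logic if every formula of the logic is true at every point under every valuation. $R[x]=\{y: xRy\}$. *)

theory Defs
  imports Main
begin

datatype fm = Var nat | Bot | Imp fm fm | Box fm | All fm

definition Neg :: "fm \<Rightarrow> fm" where "Neg p = Imp p Bot"
definition Dia :: "fm \<Rightarrow> fm" where "Dia p = Neg (Box (Neg p))"
definition Ex :: "fm \<Rightarrow> fm" where "Ex p = Neg (All (Neg p))"

text \<open>Classical tautologies: formulas true under every Boolean assignment
  to propositional letters and to modalized subformulas (i.e. substitution
  instances of propositional tautologies).\<close>
fun tval :: "(fm \<Rightarrow> bool) \<Rightarrow> fm \<Rightarrow> bool" where
  "tval v (Var n) = v (Var n)"
| "tval v Bot = False"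
| "tval v (Imp p q) = (tval v p \<longrightarrow> tval v q)"
| "tval v (Box p) = v (Box p)"
| "tval v (All p) = v (All p)"

definition tautology :: "fm \<Rightarrow> bool" where
  "tautology p = (\<forall>v. tval v p)"

fun subst :: "(nat \<Rightarrow> fm) \<Rightarrow> fm \<Rightarrow> fm" where
  "subst s (Var n) = s n"
| "subst s Bot = Bot"
| "subst s (Imp p q) = Imp (subst s p) (subst s q)"
| "subst s (Box p) = Box (subst s p)"
| "subst s (All p) = All (subst s p)"

abbreviation "P \<equiv> Var 0"
abbreviation "Q \<equiv> Var 1"

definition ms4_axioms :: "fm set" where
  "ms4_axioms = {
     Imp (Box (Imp P Q)) (Imp (Box P) (Box Q)),
     Imp (Box P) P,
     Imp (Box P) (Box (Box P)),
     Imp (All (Imp P Q)) (Imp (All P) (All Q)),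
     Imp (All P) P,
     Imp (Ex P) (All (Ex P)),
     Imp (Box (All P)) (All (Box P)) }"

inductive_set ms4_ext :: "fm set \<Rightarrow> fm set" for A where
  taut: "tautology p \<Longrightarrow> p \<in> ms4_ext A"
| ax: "p \<in> ms4_axioms \<Longrightarrow> p \<in> ms4_ext A"
| extra: "p \<in> A \<Longrightarrow> p \<in> ms4_ext A"
| mp: "p \<in> ms4_ext A \<Longrightarrow> Imp p q \<in> ms4_ext A \<Longrightarrow> q \<in> ms4_ext A"
| sub: "p \<in> ms4_ext A \<Longrightarrow> subst s p \<in> ms4_ext A"
| necBox: "p \<in> ms4_ext A \<Longrightarrow> Box p \<in> ms4_ext A"
| necAll: "p \<in> ms4_ext A \<Longrightarrow> All p \<in> ms4_ext A"

definition MS4 :: "fm set" where "MS4 = ms4_ext {}"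

definition grz_axiom :: fm where
  "grz_axiom = Imp (Box (Imp (Box (Imp P (Box P))) P)) P"

definition kur_axiom :: fm where
  "kur_axiom = Imp (Box (All (Dia (Box P)))) (Dia (All P))"

definition MGrz :: "fm set" where "MGrz = ms4_ext {grz_axiom}"
definition LKur :: "fm set" where "LKur = ms4_ext {kur_axiom}"

definition ms4_frame :: "'w set \<Rightarrow> ('w \<Rightarrow> 'w \<Rightarrow> bool) \<Rightarrow> ('w \<Rightarrow> 'w \<Rightarrow> bool) \<Rightarrow> bool" where
  "ms4_frame Y R E \<longleftrightarrow>
     (\<forall>x\<in>Y. R x x) \<and> (\<forall>x\<in>Y. \<forall>y\<in>Y. \<forall>z\<in>Y. R x y \<longrightarrow> R y z \<longrightarrow> R x z) \<and>
     (\<forall>x\<in>Y. E x x) \<and> (\<forall>x\<in>Y. \<forall>y\<in>Y. E x y \<longrightarrow> E y x) \<and>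
     (\<forall>x\<in>Y. \<forall>y\<in>Y. \<forall>z\<in>Y. E x y \<longrightarrow> E y z \<longrightarrow> E x z) \<and>
     (\<forall>x y. R x y \<longrightarrow> x \<in> Y \<and> y \<in> Y) \<and> (\<forall>x y. E x y \<longrightarrow> x \<in> Y \<and> y \<in> Y) \<and>
     (\<forall>x\<in>Y. \<forall>y\<in>Y. \<forall>z\<in>Y. E x y \<longrightarrow> R y z \<longrightarrow> (\<exists>u\<in>Y. R x u \<and> E u z))"

fun sat :: "'w set \<Rightarrow> ('w \<Rightarrow> 'w \<Rightarrow> bool) \<Rightarrow> ('w \<Rightarrow> 'w \<Rightarrow> bool) \<Rightarrow> (nat \<Rightarrow> 'w set) \<Rightarrow> 'w \<Rightarrow> fm \<Rightarrow> bool" where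
  "sat Y R E V x (Var n) = (x \<in> V n)"
| "sat Y R E V x Bot = False"
| "sat Y R E V x (Imp p q) = (sat Y R E V x p \<longrightarrow> sat Y R E V x q)"
| "sat Y R E V x (Box p) = (\<forall>y\<in>Y. R x y \<longrightarrow> sat Y R E V y p)"
| "sat Y R E V x (All p) = (\<forall>y\<in>Y. E x y \<longrightarrow> sat Y R E V y p)"

definition valid_in :: "'w set \<Rightarrow> ('w \<Rightarrow> 'w \<Rightarrow> bool) \<Rightarrow> ('w \<Rightarrow> 'w \<Rightarrow> bool) \<Rightarrow> fm \<Rightarrow> bool" where
  "valid_in Y R E p = (\<forall>V. \<forall>x\<in>Y. sat Y R E (\<lambda>n. V n \<inter> Y) x p)"

definition validates :: "'w set \<Rightarrow> ('w \<Rightarrow> 'w \<Rightarrow> bool) \<Rightarrow> ('w \<Rightarrow> 'w \<Rightarrow> bool) \<Rightarrow> fm set \<Rightarrow> bool" where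
  "validates Y R E L = (\<forall>p\<in>L. valid_in Y R E p)"

datatype pt = a | b | c

definition K_Y :: "pt set" where "K_Y = {a, b}"
definition K_R :: "pt \<Rightarrow> pt \<Rightarrow> bool" where
  "K_R x y = ((x = a \<and> y \<in> {a, b}) \<or> (x = b \<and> y = b))"
definition K_E :: "pt \<Rightarrow> pt \<Rightarrow> bool" where
  "K_E x y = (x \<in> {a, b} \<and> y \<in> {a, b})"

definition H_Y :: "pt set" where "H_Y = {a, b, c}"
definition H_R :: "pt \<Rightarrow> pt \<Rightarrow> bool" where
  "H_R x y = ((x = a \<and> y \<in> {a, b, c}) \<or> (x \<in> {b, c} \<and> y \<in> {b, c}))"
definition H_E :: "pt \<Rightarrow> pt \<Rightarrow> bool" where
  "H_E x y = ((x \<in> {a, b} \<and> y \<in> {a, b}) \<or> (x = c \<and> y = c))"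

end

theory Submission
  imports Defs
begin

lemma tval_sat: "tval (\<lambda>q. sat Y R E V x q) p = sat Y R E V x p"
  by (induction p) auto

lemma subst_sat:
  "x \<in> Y \<Longrightarrow> sat Y R E W x (subst s p) = sat Y R E (\<lambda>n. {y\<in>Y. sat Y R E W y (s n)}) x p"
  by (induction p arbitrary: x) auto

lemma A3: "\<forall>x\<in>Y. \<forall>y\<in>Y. \<forall>z\<in>Y. R x y \<longrightarrow> R y z \<longrightarrow> R x z \<Longrightarrow> x \<in> Y \<Longrightarrow> sat Y R E W x (Imp (Box P) (Box (Box P)))"
  by (simp (no_asm)) (meson)
lemma A6: "\<forall>x\<in>Y. \<forall>y\<in>Y. E x y \<longrightarrow> E y x \<Longrightarrow> \<forall>x\<in>Y. \<forall>y\<in>Y. \<forall>z\<in>Y. E x y \<longrightarrow> E y z \<longrightarrow> E x z \<Longrightarrow> x \<in> Y \<Longrightarrow> sat Y R E W x (Imp (Ex P) (All (Ex P)))"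
  by (simp (no_asm) add: Ex_def Neg_def) (meson)
lemma A7: "\<forall>x\<in>Y. \<forall>y\<in>Y. \<forall>z\<in>Y. E x y \<longrightarrow> R y z \<longrightarrow> (\<exists>u\<in>Y. R x u \<and> E u z) \<Longrightarrow> x \<in> Y \<Longrightarrow> sat Y R E W x (Imp (Box (All P)) (All (Box P)))"
  by (simp (no_asm)) (meson)

lemma ms4_ax_valid:
  assumes fr: "ms4_frame Y R E" and p: "p \<in> ms4_axioms"
  shows "valid_in Y R E p"
proof -
  note F = fr[unfolded ms4_frame_def]
  have rr: "\<forall>x\<in>Y. R x x" and rt: "\<forall>x\<in>Y. \<forall>y\<in>Y. \<forall>z\<in>Y. R x y \<longrightarrow> R y z \<longrightarrow> R x z"
    and er: "\<forall>x\<in>Y. E x x" and es: "\<forall>x\<in>Y. \<forall>y\<in>Y. E x y \<longrightarrow> E y x"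
    and et: "\<forall>x\<in>Y. \<forall>y\<in>Y. \<forall>z\<in>Y. E x y \<longrightarrow> E y z \<longrightarrow> E x z"
    and cm: "\<forall>x\<in>Y. \<forall>y\<in>Y. \<forall>z\<in>Y. E x y \<longrightarrow> R y z \<longrightarrow> (\<exists>u\<in>Y. R x u \<and> E u z)"
    using F by (rule conjunct1, rule conjunct2[THEN conjunct1], rule conjunct2[THEN conjunct2, THEN conjunct1],
      rule conjunct2[THEN conjunct2, THEN conjunct2, THEN conjunct1],
      rule conjunct2[THEN conjunct2, THEN conjunct2, THEN conjunct2, THEN conjunct1],
      rule conjunct2[THEN conjunct2, THEN conjunct2, THEN conjunct2, THEN conjunct2, THEN conjunct2, THEN conjunct2])
  have "sat Y R E W x q" if x: "x \<in> Y" and q: "q \<in> ms4_axioms" for W x q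
    using q unfolding ms4_axioms_def
  proof (elim insertE emptyE)
    assume "q = Imp (Box (Imp P Q)) (Imp (Box P) (Box Q))" then show ?thesis by simp
  next
    assume "q = Imp (Box P) P" then show ?thesis using rr x by simp
  next
    assume "q = Imp (Box P) (Box (Box P))" then show ?thesis using A3[OF rt x] by simp
  next
    assume "q = Imp (All (Imp P Q)) (Imp (All P) (All Q))" then show ?thesis by simp
  next
    assume "q = Imp (All P) P" then show ?thesis using er x by simp
  next
    assume "q = Imp (Ex P) (All (Ex P))" then show ?thesis using A6[OF es et x] by simp
  next
    assume "q = Imp (Box (All P)) (All (Box P))" then show ?thesis using A7[OF cm x] by simp
  qed
  then show ?thesis using p unfolding valid_in_def by simp
qed

lemma sound:
  assumes fr: "ms4_frame Y R E" and A: "\<forall>p\<in>A. valid_in Y R E p"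
  shows "q \<in> ms4_ext A \<Longrightarrow> valid_in Y R E q"
proof (induction q rule: ms4_ext.induct)
  case (taut p)
  then show ?case unfolding valid_in_def tautology_def using tval_sat by metis
next
  case (ax p)
  then show ?case using ms4_ax_valid fr by blast
next
  case (extra p)
  then show ?case using A by blast
next
  case (mp p q)
  then show ?case unfolding valid_in_def by simp
next
  case (sub p s)
  show ?case unfolding valid_in_def
  proof (intro allI ballI)
    fix V x assume x: "x \<in> Y"
    have "sat Y R E (\<lambda>n. {y\<in>Y. sat Y R E (\<lambda>n. V n \<inter> Y) y (s n)} \<inter> Y) x p"
      using x sub.IH unfolding valid_in_def
      by (rule_tac bspec[OF spec[of _ "\<lambda>n. {y\<in>Y. sat Y R E (\<lambda>n. V n \<inter> Y) y (s n)}"]])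
    moreover have "(\<lambda>n. {y\<in>Y. sat Y R E (\<lambda>n. V n \<inter> Y) y (s n)} \<inter> Y)
       = (\<lambda>n. {y\<in>Y. sat Y R E (\<lambda>n. V n \<inter> Y) y (s n)})" by auto
    ultimately show "sat Y R E (\<lambda>n. V n \<inter> Y) x (subst s p)" using subst_sat[OF x] by simp
  qed
next
  case (necBox p)
  then show ?case unfolding valid_in_def by simp
next
  case (necAll p)
  then show ?case unfolding valid_in_def by simp
qed

lemma K_frame: "ms4_frame K_Y K_R K_E"
  unfolding ms4_frame_def K_Y_def K_R_def K_E_def by auto

lemma H_frame: "ms4_frame H_Y H_R H_E"
  unfolding ms4_frame_def H_Y_def H_R_def H_E_def by auto

lemma grz_K: "valid_in K_Y K_R K_E grz_axiom"
  unfolding valid_in_def grz_axiom_def K_Y_def K_R_def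
  by simp blast

lemma kur_H: "valid_in H_Y H_R H_E kur_axiom"
  unfolding valid_in_def kur_axiom_def H_Y_def H_R_def H_E_def Dia_def Neg_def
  by simp

lemma kur_not_K: "\<not> valid_in K_Y K_R K_E kur_axiom"
proof
  assume "valid_in K_Y K_R K_E kur_axiom"
  then have "sat K_Y K_R K_E (\<lambda>n. (\<lambda>_. {b}) n \<inter> K_Y) a kur_axiom"
    unfolding valid_in_def K_Y_def by (drule_tac spec[of _ "\<lambda>_. {b}"]) simp
  then show False
    unfolding kur_axiom_def K_Y_def K_R_def K_E_def Dia_def Neg_def by auto
qed

lemma grz_not_H: "\<not> valid_in H_Y H_R H_E grz_axiom"
proof
  assume "valid_in H_Y H_R H_E grz_axiom"
  then have "sat H_Y H_R H_E (\<lambda>n. (\<lambda>_. {c}) n \<inter> H_Y) b grz_axiom"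
    unfolding valid_in_def H_Y_def by (drule_tac spec[of _ "\<lambda>_. {c}"]) simp
  then show False
    unfolding grz_axiom_def H_Y_def H_R_def H_E_def by auto
qed

theorem theorem5p4:
  shows "ms4_frame K_Y K_R K_E \<and> ms4_frame H_Y H_R H_E \<and>
         (validates K_Y K_R K_E MGrz \<and> \<not> validates K_Y K_R K_E LKur) \<and>
         (validates H_Y H_R H_E LKur \<and> \<not> validates H_Y H_R H_E MGrz) \<and>
         (\<not> MGrz \<subseteq> LKur \<and> \<not> LKur \<subseteq> MGrz)"
proof -
  have g1: "grz_axiom \<in> MGrz" unfolding MGrz_def by (rule ms4_ext.extra) simp
  have k1: "kur_axiom \<in> LKur" unfolding LKur_def by (rule ms4_ext.extra) simp
  have vK: "validates K_Y K_R K_E MGrz"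
    unfolding validates_def MGrz_def using sound[OF K_frame] grz_K by blast
  have vH: "validates H_Y H_R H_E LKur"
    unfolding validates_def LKur_def using sound[OF H_frame] kur_H by blast
  have nK: "\<not> validates K_Y K_R K_E LKur" using k1 kur_not_K unfolding validates_def by blast
  have nH: "\<not> validates H_Y H_R H_E MGrz" using g1 grz_not_H unfolding validates_def by blast
  have "grz_axiom \<notin> LKur" using vH grz_not_H unfolding validates_def by blast
  moreover have "kur_axiom \<notin> MGrz" using vK kur_not_K unfolding validates_def by blast
  ultimately show ?thesis using K_frame H_frame vK vH nK nH g1 k1 by blast
qed

end
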